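(* Let $\Xi>1$, let $\rho:[1,\Xi]\to\mathbb{R}$ be continuous, let $\tilde\lambda\in\mathbb{C}$, and let $c>-1$ be a real number satisfying \[ 1=\sqrt{1+c}+\frac12\int_1^\Xi dT\,\frac{\rho(T)}{(\sqrt{1+c}+\sqrt{T+c})\sqrt{T+c}}. \] For $X\geq 1$ put $W(X):=\sqrt{X+c}+\frac12\int_1^\Xi dT\,\frac{\rho(T)}{(\sqrt{X+c}+\sqrt{T+c})\sqrt{T+c}}$, and for $X,Y\geq 1$ put \[ G(X|Y):=\frac{4\tilde\lambda^2}{\sqrt{X+c}\,\sqrt{Y+c}\,(\sqrt{X+c}+\sqrt{Y+c})^2},\qquad G(X,Y,Y):=8\tilde\lambda\frac{\partial}{\partial Y}\frac{W(X)-W(Y)}{X-Y}. \] Then $G(X|Y)$ solves the integral equation for the $(1{+}1)$-point function: for all $X,Y\in[1,\Xi]$ with $X\neq Y$, \[ W(X)\,G(X|Y)=-\tilde\lambda\,G(X,Y,Y)-\frac12\int_1^\Xi dT\,\rho(T)\,\frac{G(X|Y)-G(T|Y)}{X-T}. \]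
   Context: This is the Schwinger–Dyson equation for the large-matrix limit of the connected correlation function with two boundary components of length one in the $\Phi^3$ matrix model (two-dimensional case, with normalisation parameters $Z=1$, $\nu=0$); $G(X,Y,Y)$ is the corresponding 3-point function. Square roots are positive; the integrand at $T=X$ is understood by continuous extension. *)

theory Defs
  imports "HOL-Analysis.Analysis"
begin

definition Wfun :: "real \<Rightarrow> real \<Rightarrow> (real \<Rightarrow> real) \<Rightarrow> real \<Rightarrow> real" where
  "Wfun Xi c rho X = sqrt (X + c) + 1/2 * integral {1..Xi}
      (\<lambda>T. rho T / ((sqrt (X + c) + sqrt (T + c)) * sqrt (T + c)))"

definition G11 :: "complex \<Rightarrow> real \<Rightarrow> real \<Rightarrow> real \<Rightarrow> complex" where
  "G11 lam c X Y = 4 * lam ^ 2 /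
      complex_of_real (sqrt (X + c) * sqrt (Y + c) * (sqrt (X + c) + sqrt (Y + c)) ^ 2)"

definition G3 :: "real \<Rightarrow> real \<Rightarrow> (real \<Rightarrow> real) \<Rightarrow> complex \<Rightarrow> real \<Rightarrow> real \<Rightarrow> complex" where
  "G3 Xi c rho lam X Y = 8 * lam *
      complex_of_real (deriv (\<lambda>y. (Wfun Xi c rho X - Wfun Xi c rho y) / (X - y)) Y)"

end

theory Submission
  imports Defs
begin

lemma alg1:
  fixes s t u :: real
  assumes "s > 0" "t > 0" "u > 0" "s \<noteq> t" "s \<noteq> u"
  shows "(1/(s*t*(s+t)^2) - 1/(u*t*(u+t)^2))/((s-u)*(s+u)) =
    (-(1/(s*t*(s+t)^2)+1/((t-s)*t*(s+t)^2)+1/((t-s)^2*t*(s+t)))) / (u*(s+u))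
    + (1/((t-s)*t*(s+t)^2)+1/((t-s)^2*t*(s+t))) / (u*(t+u))
    + (1/((t-s)*t*(s+t))) / (u*(t+u)^2)"
proof -
  have h2: "t - s \<noteq> 0" "s - u \<noteq> 0" using assms by auto
  have h3: "s + t \<noteq> 0" "u + t \<noteq> 0" "s + u \<noteq> 0" "t + u \<noteq> 0" using assms by auto
  show ?thesis using assms h2 h3
    apply (simp add: divide_simps)
    apply (simp add: power2_eq_square algebra_simps)
    done
qed

lemma alg2:
  fixes s t I1 I2 I3 :: real
  assumes "s > 0" "t > 0" "s \<noteq> t"
  shows "(s + 1/2*I1) * (1/(s*t*(s+t)^2)) =
     -2 * ((-(1/(2*t) + 1/2*(-(1/(2*t))*I3)) * (s^2-t^2) + ((s + 1/2*I1) - (t + 1/2*I2)))/(s^2-t^2)^2)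
     - 1/2 * ((-(1/(s*t*(s+t)^2)+1/((t-s)*t*(s+t)^2)+1/((t-s)^2*t*(s+t)))) * I1
    + (1/((t-s)*t*(s+t)^2)+1/((t-s)^2*t*(s+t))) * I2
    + (1/((t-s)*t*(s+t))) * I3)"
proof -
  have h2: "t - s \<noteq> 0" "s - t \<noteq> 0" using assms by auto
  have h3: "s + t \<noteq> 0" "t + s \<noteq> 0" using assms by auto
  have h4: "s^2 - t^2 = (s-t)*(s+t)" by (simp add: power2_eq_square algebra_simps)
  show ?thesis unfolding h4 using assms h2 h3
    apply (simp add: divide_simps)
    apply (simp add: power2_eq_square algebra_simps)
    done
qed

lemma alg3: fixes r a b d s t u :: real
  shows "r * (a/(u*(s+u)) + b/(u*(t+u)) + d/(u*(t+u)^2)) = a*(r/((s+u)*u)) + b*(r/((t+u)*u)) + d*(r/((t+u)^2*u))"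
  by (simp add: algebra_simps)
lemma alg4: fixes k :: complex and r A B D :: real
  shows "complex_of_real r * (k / complex_of_real A - k / complex_of_real B) / complex_of_real D = k * complex_of_real (r * ((1/A - 1/B)/D))"
  by (simp add: divide_inverse algebra_simps)
lemma alg5: fixes k :: complex and W A :: real
  shows "complex_of_real W * (k / complex_of_real A) = k * complex_of_real (W * (1/A))"
  by (simp add: divide_inverse algebra_simps)
lemma alg6: fixes lam :: complex and D K :: real
  shows "- lam * (8 * lam * complex_of_real D) = 4 * lam^2 * complex_of_real (-2 * D)"
  by (simp add: power2_eq_square algebra_simps)
lemma alg7: fixes lam :: complex and D K :: real
  shows "4 * lam^2 * complex_of_real (-2 * D - 1/2 * K) = 4 * lam^2 * complex_of_real (-2 * D) - 1/2 * (4 * lam^2 * complex_of_real K)"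
  by (simp add: algebra_simps)

lemma der_aux:
  fixes g :: "real \<Rightarrow> real"
  assumes "(g has_real_derivative g') (at y)" "g y + a \<noteq> 0" "a \<noteq> 0"
  shows "((\<lambda>y. r / ((g y + a) * a)) has_real_derivative (- g' * (r / ((g y + a)^2 * a)))) (at y)"
  apply (rule derivative_eq_intros assms(1) refl)+
  using assms(2,3) apply simp
  using assms(2,3) apply (simp add: divide_simps)
  apply (simp add: algebra_simps power2_eq_square)
  done

theorem proposition6:
  fixes Xi c :: real and rho :: "real \<Rightarrow> real" and lam :: complex and X Y :: real
  assumes "Xi > 1"
    and "continuous_on {1..Xi} rho"
    and "c > -1"
    and "1 = sqrt (1 + c) + 1/2 * integral {1..Xi}
           (\<lambda>T. rho T / ((sqrt (1 + c) + sqrt (T + c)) * sqrt (T + c)))"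
    and "X \<in> {1..Xi}" and "Y \<in> {1..Xi}" and "X \<noteq> Y"
  shows "complex_of_real (Wfun Xi c rho X) * G11 lam c X Y =
           - lam * G3 Xi c rho lam X Y
           - 1/2 * integral {1..Xi}
               (\<lambda>T. complex_of_real (rho T) * (G11 lam c X Y - G11 lam c T Y)
                     / complex_of_real (X - T))"
proof -
  define u where "u = (\<lambda>T::real. sqrt (T + c))"
  define s where "s = u X"
  define t where "t = u Y"
  have upos: "\<And>T. T \<ge> 1 \<Longrightarrow> u T > 0" using assms(3) by (simp add: u_def)
  have Xge: "X \<ge> 1" "Y \<ge> 1" "X \<le> Xi" using assms(5,6) by auto
  have spos: "s > 0" "t > 0" using upos Xge by (auto simp: s_def t_def)
  have sq: "\<And>T. T \<ge> 1 \<Longrightarrow> (u T)^2 = T + c" using assms(3) by (simp add: u_def)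
  have st: "s \<noteq> t"
  proof
    assume "s = t" then have "s^2 = t^2" by simp
    then show False using sq[OF Xge(1)] sq[OF Xge(2)] assms(7) by (simp add: s_def t_def)
  qed
  define p1 where "p1 = (\<lambda>T. rho T / ((s + u T) * u T))"
  define p2 where "p2 = (\<lambda>T. rho T / ((t + u T) * u T))"
  define p3 where "p3 = (\<lambda>T. rho T / ((t + u T)^2 * u T))"
  have cu: "continuous_on {1..Xi} u" unfolding u_def by (intro continuous_intros)
  have c1: "continuous_on {1..Xi} p1" unfolding p1_def
    using upos spos by (intro continuous_intros assms(2) cu) (auto; smt (verit) upos)
  have c2: "continuous_on {1..Xi} p2" unfolding p2_def
    using upos spos by (intro continuous_intros assms(2) cu) (auto; smt (verit) upos)
  have c3: "continuous_on {1..Xi} p3" unfolding p3_def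
    using upos spos by (intro continuous_intros assms(2) cu) (auto; smt (verit) upos)
  define U where "U = {-c<..}"
  define f where "f = (\<lambda>y T. rho T / ((sqrt (y + c) + u T) * u T))"
  define fx where "fx = (\<lambda>y T. - (1/(2 * sqrt (y+c))) * (rho T / ((sqrt (y + c) + u T)^2 * u T)))"
  have fder: "((\<lambda>y. f y T) has_field_derivative fx y T) (at y within U)"
    if y: "y \<in> U" and T: "T \<in> cbox 1 Xi" for y T
  proof -
    have yc: "y + c > 0" using y by (simp add: U_def)
    have uT: "u T > 0" using T upos by auto
    have sy: "sqrt (y+c) > 0" using yc by simp
    have dsq: "((\<lambda>y. sqrt (y + c)) has_real_derivative (inverse (sqrt (y+c)) / 2 * 1)) (at y)"
      by (rule DERIV_chain2[where f=sqrt and g="\<lambda>y. y + c"])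
        (use yc in \<open>auto intro!: derivative_eq_intros DERIV_real_sqrt\<close>)
    have "((\<lambda>y. f y T) has_field_derivative fx y T) (at y)"
    proof -
      have h: "sqrt (y+c) + u T \<noteq> 0" "u T \<noteq> 0" using sy uT by linarith+
      have e: "fx y T = - (inverse (sqrt (y + c)) / 2 * 1) * (rho T / ((sqrt (y + c) + u T)^2 * u T))"
        by (simp add: fx_def field_simps)
      show ?thesis unfolding f_def e by (rule der_aux[OF dsq h])
    qed
    then show ?thesis by (rule has_field_derivative_at_within)
  qed
  have cbx: "cbox 1 Xi = {1..Xi}" by simp
  have YU: "Y \<in> U" using Xge assms(3) by (simp add: U_def)
  have fint: "f y integrable_on cbox 1 Xi" if y: "y \<in> U" for y
  proof -
    have sy: "sqrt (y+c) > 0" using y by (simp add: U_def)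
    have "continuous_on {1..Xi} (f y)" unfolding f_def
      using upos sy by (intro continuous_intros assms(2) cu) (auto; smt (verit) upos real_sqrt_ge_zero)
    then show ?thesis unfolding cbx by (rule integrable_continuous_interval)
  qed
  have crs: "continuous_on (U \<times> {1..Xi}) (\<lambda>z. rho (snd z))"
    by (rule continuous_on_compose2[OF assms(2) continuous_on_snd]) auto
  have cus: "continuous_on (U \<times> {1..Xi}) (\<lambda>z. u (snd z))"
    by (rule continuous_on_compose2[OF cu continuous_on_snd]) auto
  have cfx: "continuous_on (U \<times> cbox 1 Xi) (\<lambda>(y, T). fx y T)"
  proof -
    have e: "(\<lambda>(y, T). fx y T) = (\<lambda>z. - (1/(2 * sqrt (fst z + c))) * (rho (snd z) / ((sqrt (fst z + c) + u (snd z))^2 * u (snd z))))"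
      by (auto simp: fx_def split_beta)
    have p1: "\<And>z. z \<in> U \<times> {1..Xi} \<Longrightarrow> sqrt (fst z + c) > 0" by (auto simp: U_def)
    have p2: "\<And>z. z \<in> U \<times> {1..Xi} \<Longrightarrow> u (snd z) > 0" using upos by auto
    have nz: "\<forall>z\<in>U \<times> {1..Xi}. 2 * sqrt (fst z + c) \<noteq> 0 \<and> (sqrt (fst z + c) + u (snd z))^2 * u (snd z) \<noteq> 0"
    proof
      fix z assume z: "z \<in> U \<times> {1..Xi}"
      have a: "sqrt (fst z + c) > 0" "u (snd z) > 0" using p1[OF z] p2[OF z] by auto
      have "(sqrt (fst z + c) + u (snd z))^2 * u (snd z) > 0"
        using a by (intro mult_pos_pos zero_less_power add_pos_pos)
      then show "2 * sqrt (fst z + c) \<noteq> 0 \<and> (sqrt (fst z + c) + u (snd z))^2 * u (snd z) \<noteq> 0"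
        using a by (metis less_irrefl mult_eq_0_iff zero_neq_numeral)
    qed
    show ?thesis unfolding e cbx
      by (intro continuous_intros crs cus) (use nz in auto)
  qed
  have Lb: "((\<lambda>y. integral (cbox 1 Xi) (f y)) has_field_derivative integral (cbox 1 Xi) (fx Y)) (at Y within U)"
    by (rule leibniz_rule_field_derivative[OF fder fint cfx YU]) (auto simp: U_def)
  have Lb2: "((\<lambda>y. integral {1..Xi} (f y)) has_field_derivative integral {1..Xi} (fx Y)) (at Y)"
    using Lb unfolding cbx by (subst (asm) at_within_open[OF YU]) (auto simp: U_def)
  have Yc: "Y + c > 0" using Xge assms(3) by simp
  have dsqY: "((\<lambda>y. sqrt (y + c)) has_real_derivative (inverse (sqrt (Y+c)) / 2 * 1)) (at Y)"
    by (rule DERIV_chain2[where f=sqrt and g="\<lambda>y. y + c"])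
      (use Yc in \<open>auto intro!: derivative_eq_intros DERIV_real_sqrt\<close>)
  have Wf: "Wfun Xi c rho = (\<lambda>y. sqrt (y + c) + 1/2 * integral {1..Xi} (f y))"
    by (rule ext) (simp add: Wfun_def f_def u_def)
  define I1 where "I1 = integral {1..Xi} p1"
  define I2 where "I2 = integral {1..Xi} p2"
  define I3 where "I3 = integral {1..Xi} p3"
  have fxY: "fx Y = (\<lambda>T. (-(1/(2*t))) * p3 T)"
    by (rule ext) (simp add: fx_def p3_def t_def u_def)
  define Wp where "Wp = inverse t / 2 * 1 + 1/2 * (-(1/(2*t)) * I3)"
  have dW: "(Wfun Xi c rho has_real_derivative Wp) (at Y)"
    unfolding Wf Wp_def
    using DERIV_add[OF dsqY DERIV_cmult[OF Lb2, of "1/2"]]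
    by (simp add: fxY I3_def t_def u_def)
  have WX: "Wfun Xi c rho X = s + 1/2 * I1" by (simp add: Wfun_def I1_def p1_def s_def u_def)
  have WY: "Wfun Xi c rho Y = t + 1/2 * I2" by (simp add: Wfun_def I2_def p2_def t_def u_def)
  define Dv where "Dv = ((0 - Wp) * (X - Y) - (Wfun Xi c rho X - Wfun Xi c rho Y) * (0 - 1)) / ((X - Y) * (X - Y))"
  have dg: "((\<lambda>y. (Wfun Xi c rho X - Wfun Xi c rho y) / (X - y)) has_real_derivative Dv) (at Y)"
    unfolding Dv_def
    by (rule DERIV_divide[OF DERIV_diff[OF DERIV_const dW] DERIV_diff[OF DERIV_const DERIV_ident]])
      (use assms(7) in simp)
  have dv: "deriv (\<lambda>y. (Wfun Xi c rho X - Wfun Xi c rho y) / (X - y)) Y = Dv"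
    by (rule DERIV_imp_deriv[OF dg])
  define a where "a = -(1/(s*t*(s+t)^2)+1/((t-s)*t*(s+t)^2)+1/((t-s)^2*t*(s+t)))"
  define b where "b = 1/((t-s)*t*(s+t)^2)+1/((t-s)^2*t*(s+t))"
  define d where "d = 1/((t-s)*t*(s+t))"
  define Q where "Q = (\<lambda>T. rho T * ((1/(s*t*(s+t)^2) - 1/(u T*t*(u T+t)^2))/(X-T)))"
  have hp: "((\<lambda>T. a * p1 T + b * p2 T + d * p3 T) has_integral (a*I1 + b*I2 + d*I3)) {1..Xi}"
    unfolding I1_def I2_def I3_def
    by (intro has_integral_add has_integral_mult_right integrable_integral
        integrable_continuous_interval c1 c2 c3)
  have hQ: "(Q has_integral (a*I1 + b*I2 + d*I3)) {1..Xi}"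
  proof (rule has_integral_spike[OF negligible_sing _ hp])
    fix T assume T: "T \<in> {1..Xi} - {X}"
    have uT: "u T > 0" using T upos by auto
    have sT: "s \<noteq> u T"
    proof
      assume "s = u T" then have "s^2 = (u T)^2" by simp
      then show False using sq[OF Xge(1)] sq[of T] T by (auto simp: s_def)
    qed
    have XT: "X - T = (s - u T) * (s + u T)"
      using sq[OF Xge(1)] sq[of T] T by (auto simp: s_def algebra_simps power2_eq_square)
    have A: "(1/(s*t*(s+t)^2) - 1/(u T*t*(u T+t)^2))/(X-T) = a / (u T*(s+u T)) + b / (u T*(t+u T)) + d / (u T*(t+u T)^2)"
      unfolding XT a_def b_def d_def by (rule alg1[OF spos uT st sT])
    show "Q T = a * p1 T + b * p2 T + d * p3 T"
      unfolding Q_def A p1_def p2_def p3_def by (rule alg3)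
  qed
  have CI: "complex_of_real (rho T) * (G11 lam c X Y - G11 lam c T Y) / complex_of_real (X - T)
       = 4 * lam^2 * complex_of_real (Q T)" for T
    unfolding G11_def Q_def s_def t_def u_def by (rule alg4)
  have hC: "((\<lambda>T. 4 * lam^2 * complex_of_real (Q T)) has_integral (4 * lam^2 * complex_of_real (a*I1 + b*I2 + d*I3))) {1..Xi}"
    by (intro has_integral_mult_right has_integral_of_real hQ)
  have intC: "integral {1..Xi} (\<lambda>T. complex_of_real (rho T) * (G11 lam c X Y - G11 lam c T Y)
                     / complex_of_real (X - T)) = 4 * lam^2 * complex_of_real (a*I1 + b*I2 + d*I3)"
    unfolding CI using hC by (rule integral_unique)
  have XY: "X - Y = s^2 - t^2" using sq[OF Xge(1)] sq[OF Xge(2)] by (simp add: s_def t_def)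
  have Dv2: "Dv = (-(1/(2*t) + 1/2*(-(1/(2*t))*I3)) * (s^2-t^2) + ((s + 1/2*I1) - (t + 1/2*I2)))/(s^2-t^2)^2"
    unfolding Dv_def Wp_def WX WY XY by (simp add: power2_eq_square inverse_eq_divide)
  have R: "(s + 1/2*I1) * (1/(s*t*(s+t)^2)) = -2 * Dv - 1/2 * (a*I1 + b*I2 + d*I3)"
    unfolding Dv2 a_def b_def d_def by (rule alg2[OF spos st])
  have L: "complex_of_real (Wfun Xi c rho X) * G11 lam c X Y = 4 * lam^2 * complex_of_real ((s + 1/2*I1) * (1/(s*t*(s+t)^2)))"
    unfolding G11_def WX s_def t_def u_def by (rule alg5)
  have G: "- lam * G3 Xi c rho lam X Y = 4 * lam^2 * complex_of_real (-2 * Dv)"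
    unfolding G3_def dv by (rule alg6)
  show ?thesis unfolding L G intC R by (rule alg7)
qed
end
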